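(* There exist a tight $7$-point simplex and a tight $8$-point simplex in $G(2,4)$.
   Context: $G(2,4)$ is the space of $2$-dimensional linear subspaces of $\mathbb{R}^4$, each identified with its orthogonal projection matrix. A tight $N$-point simplex in $G(m,n)$ is a set of $N$ distinct subspaces with projection matrices $\Pi_1,\dots,\Pi_N$ such that $\operatorname{tr}(\Pi_i\Pi_j)=\frac{m(Nm-n)}{n(N-1)}$ for all $i\ne j$; for $(m,n)=(2,4)$ this value is $\frac{N-2}{N-1}$. *)

theory Defs
  imports "HOL-Analysis.Analysis"
begin

text \<open>The Grassmannian G(m,n) of m-dimensional subspaces of R^n, with n = CARD('n),
  each subspace identified with its orthogonal projection matrix: a symmetric
  idempotent real n x n matrix of rank m.\<close>
definition proj_grassmannian :: "nat \<Rightarrow> (real^'n^'n) set" where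
  "proj_grassmannian m = {P. transpose P = P \<and> P ** P = P \<and> rank P = m}"

definition tight_simplex :: "nat \<Rightarrow> nat \<Rightarrow> (nat \<Rightarrow> real^'n^'n) \<Rightarrow> bool" where
  "tight_simplex m N P \<longleftrightarrow>
     (\<forall>i<N. P i \<in> proj_grassmannian m) \<and> inj_on P {..<N} \<and>
     (\<forall>i<N. \<forall>j<N. i \<noteq> j \<longrightarrow>
        trace (P i ** P j) =
          real m * (real N * real m - real CARD('n)) / (real CARD('n) * (real N - 1)))"

end

theory Submission
  imports Defs
begin


definition v4 :: "'a \<Rightarrow> 'a \<Rightarrow> 'a \<Rightarrow> 'a \<Rightarrow> 'a^4" where
  "v4 x1 x2 x3 x4 = (\<chi> i. if i = 1 then x1 else if i = 2 then x2 else if i = 3 then x3 else x4)"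
definition v2 :: "'a \<Rightarrow> 'a \<Rightarrow> 'a^2" where
  "v2 x1 x2 = (\<chi> i. if i = 1 then x1 else x2)"

lemma v4_nth [simp]: "v4 x1 x2 x3 x4 $ 1 = x1" "v4 x1 x2 x3 x4 $ 2 = x2"
  "v4 x1 x2 x3 x4 $ 3 = x3" "v4 x1 x2 x3 x4 $ 4 = x4"
  by (simp_all add: v4_def)
lemma v2_nth [simp]: "v2 x1 x2 $ 1 = x1" "v2 x1 x2 $ 2 = x2"
  by (simp_all add: v2_def)

definition Qm :: "real \<Rightarrow> real \<Rightarrow> real \<Rightarrow> real \<Rightarrow> real \<Rightarrow> real \<Rightarrow> real^4^4" where
  "Qm a1 a2 a3 b1 b2 b3 = v4
     (v4 ((1 - a1*b1 - a2*b2 - a3*b3)/2) ((a2*b3-a3*b2)/2) ((a3*b1-a1*b3)/2) ((a1*b2-a2*b1)/2))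
     (v4 ((a2*b3-a3*b2)/2) ((1-a1*b1+a2*b2+a3*b3)/2) ((-a1*b2-a2*b1)/2) ((-a1*b3-a3*b1)/2))
     (v4 ((a3*b1-a1*b3)/2) ((-a1*b2-a2*b1)/2) ((1+a1*b1-a2*b2+a3*b3)/2) ((-a2*b3-a3*b2)/2))
     (v4 ((a1*b2-a2*b1)/2) ((-a1*b3-a3*b1)/2) ((-a2*b3-a3*b2)/2) ((1+a1*b1+a2*b2-a3*b3)/2))"

definition Um :: "real \<Rightarrow> real \<Rightarrow> real \<Rightarrow> real \<Rightarrow> real \<Rightarrow> real \<Rightarrow> real^2^4" where
  "Um a1 a2 a3 b1 b2 b3 = v4
     (v2 (1 - a1*b1 - a2*b2 - a3*b3) 0)
     (v2 (a2*b3-a3*b2) (a1-b1))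
     (v2 (a3*b1-a1*b3) (a2-b2))
     (v2 (a1*b2-a2*b1) (a3-b3))"

lemma eq44: "(A::'a^4^4) = B \<longleftrightarrow> (\<forall>i j. A$i$j = B$i$j)"
  by (simp add: vec_eq_iff)

lemma Qm_sym: "transpose (Qm a1 a2 a3 b1 b2 b3) = Qm a1 a2 a3 b1 b2 b3"
  unfolding eq44 forall_4 by (simp add: Qm_def transpose_def)

lemma Qm_trace: "trace (Qm a1 a2 a3 b1 b2 b3 ** Qm c1 c2 c3 d1 d2 d3) =
   1 + (a1*c1+a2*c2+a3*c3)*(b1*d1+b2*d2+b3*d3)"
  unfolding trace_def matrix_matrix_mult_def sum_4 by (simp add: Qm_def field_simps)

lemma Um_frame:
  assumes "a1^2+a2^2+a3^2 = 1" "b1^2+b2^2+b3^2 = 1"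
  shows "transpose (Um a1 a2 a3 b1 b2 b3) ** Um a1 a2 a3 b1 b2 b3
         = (2*(1 - a1*b1 - a2*b2 - a3*b3)) *\<^sub>R mat 1"
  using assms
  unfolding vec_eq_iff forall_2 matrix_matrix_mult_def sum_4
  apply (simp add: Um_def transpose_def mat_def)
  by (intro conjI; ((simp add: algebra_simps; fail) | algebra))

lemma Um_Qm:
  assumes "a1^2+a2^2+a3^2 = 1" "b1^2+b2^2+b3^2 = 1"
  shows "(2*(1 - a1*b1 - a2*b2 - a3*b3)) *\<^sub>R Qm a1 a2 a3 b1 b2 b3
         = Um a1 a2 a3 b1 b2 b3 ** transpose (Um a1 a2 a3 b1 b2 b3)"
  using assms
  unfolding eq44 forall_4 matrix_matrix_mult_def sum_2
  by (simp add: Um_def Qm_def transpose_def; intro conjI; ((simp add: algebra_simps; fail) | algebra))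



lemma key7:
  fixes d :: int
  assumes "\<not> (7 dvd d)"
  shows "cos (2 * (real_of_int d * (2*pi/7))) * ((2/3) * cos (real_of_int d * (2*pi/7)) + 1/3) = -1/6"
proof -
  define z where "z = real_of_int d * pi / 7"
  have y: "real_of_int d * (2*pi/7) = 2*z" by (simp add: z_def)
  have sz: "sin z \<noteq> 0"
  proof
    assume "sin z = 0"
    then obtain i where "z = real_of_int i * pi" by (auto simp: sin_zero_iff_int2)
    then have "real_of_int d = 7 * real_of_int i" by (simp add: z_def field_simps)
    then have "d = 7 * i" by linarith
    with assms show False by simp
  qed
  have s7: "sin (7*z) = 0"
    unfolding sin_zero_iff_int2 by (rule exI[of _ d]) (simp add: z_def)
  have h1: "sin z * cos (2*z) = (sin (3*z) - sin z)/2"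
    using sin_times_cos[of z "2*z"] by (simp add: algebra_simps)
  have h2: "sin z * cos (4*z) = (sin (5*z) - sin (3*z))/2"
    using sin_times_cos[of z "4*z"] by (simp add: algebra_simps)
  have h3: "sin z * cos (6*z) = (sin (7*z) - sin (5*z))/2"
    using sin_times_cos[of z "6*z"] by (simp add: algebra_simps)
  have "sin z * (2*(cos (2*z) + cos (4*z) + cos (6*z)) + 1) = 0"
    using h1 h2 h3 s7 by (simp add: algebra_simps)
  then have S: "cos (2*z) + cos (4*z) + cos (6*z) = -1/2"
    using sz by simp
  have h4: "cos (4*z) * cos (2*z) = (cos (2*z) + cos (6*z))/2"
    using cos_times_cos[of "4*z" "2*z"] by (simp add: algebra_simps)
  have "cos (2 * (2*z)) * ((2/3) * cos (2*z) + 1/3) = (2/3) * (cos (4*z) * cos (2*z)) + cos (4*z) / 3"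
    by (simp add: algebra_simps)
  also have "\<dots> = (2/3) * ((cos (2*z) + cos (6*z))/2) + cos (4*z) / 3" by (simp only: h4)
  also have "\<dots> = -1/6" using S by (simp add: field_simps)
  finally show ?thesis unfolding y .
qed


lemma rank_frame:
  fixes U :: "real^2^4" and Q :: "real^4^4"
  assumes UU: "transpose U ** U = c *\<^sub>R mat 1" and QU: "c *\<^sub>R Q = U ** transpose U" and c: "c \<noteq> 0"
  shows "Q ** Q = Q" "rank Q = 2"
proof -
  define W where "W = U ** transpose U"
  have "Q = (1/c) *\<^sub>R (c *\<^sub>R Q)" using c by simp
  then have Q: "Q = (1/c) *\<^sub>R W" unfolding QU W_def .
  have "W ** W = U ** (transpose U ** U) ** transpose U"
    unfolding W_def by (simp only: matrix_mul_assoc)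
  also have "\<dots> = U ** (c *\<^sub>R mat 1) ** transpose U" by (simp only: UU)
  also have "\<dots> = c *\<^sub>R W"
    unfolding W_def by (simp only: matrix_scalar_ac matrix_mul_rid scalar_matrix_assoc[symmetric])
  finally have WW: "W ** W = c *\<^sub>R W" .
  have "Q ** Q = ((1/c) *\<^sub>R W) ** ((1/c) *\<^sub>R W)" using Q by simp
  also have "\<dots> = ((1/c) * (1/c)) *\<^sub>R (W ** W)"
    by (simp only: matrix_scalar_ac scaleR_scaleR scalar_matrix_assoc[symmetric])
  also have "\<dots> = ((1/c) * (1/c) * c) *\<^sub>R W" by (simp only: WW scaleR_scaleR)
  also have "\<dots> = Q" using c Q by simp
  finally show "Q ** Q = Q" .
  have "U ** ((1/c) *\<^sub>R transpose U) = Q"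
    unfolding Q W_def by (simp only: matrix_scalar_ac scalar_matrix_assoc[symmetric])
  then have "rank Q = rank (U ** ((1/c) *\<^sub>R transpose U))" by simp
  also have "\<dots> \<le> rank ((1/c) *\<^sub>R transpose U)" by (rule rank_mul_le_right)
  also have "\<dots> \<le> 2" using rank_bound[of "(1/c) *\<^sub>R transpose U"] by simp
  finally have le: "rank Q \<le> 2" .
  have "transpose U ** W ** U = (transpose U ** U) ** (transpose U ** U)"
    unfolding W_def by (simp only: matrix_mul_assoc)
  also have "\<dots> = (c * c) *\<^sub>R (mat 1 :: real^2^2)"
    unfolding UU by (simp only: matrix_scalar_ac matrix_mul_rid scaleR_scaleR)
  finally have TW: "transpose U ** W ** U = (c * c) *\<^sub>R (mat 1 :: real^2^2)" .
  have "transpose U ** Q ** U = (1/c) *\<^sub>R (transpose U ** W ** U)"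
    unfolding Q by (simp only: matrix_scalar_ac scalar_matrix_assoc[symmetric])
  also have "\<dots> = c *\<^sub>R (mat 1 :: real^2^2)" unfolding TW using c by simp
  finally have E: "transpose U ** Q ** U = c *\<^sub>R (mat 1 :: real^2^2)" .
  have "rank (c *\<^sub>R (mat 1 :: real^2^2)) = CARD(2)"
    unfolding full_rank_injective
  proof (rule injI)
    fix x y :: "real^2"
    assume "(c *\<^sub>R mat 1) *v x = (c *\<^sub>R mat 1) *v y"
    then have "c *\<^sub>R x = c *\<^sub>R y"
      by (metis matrix_vector_mul_lid scaleR_matrix_vector_assoc)
    then show "x = y" using c by simp
  qed
  then have "2 = rank (transpose U ** Q ** U)" using E by simp
  also have "\<dots> \<le> rank (transpose U ** Q)" by (rule rank_mul_le_left)
  also have "\<dots> \<le> rank Q" by (rule rank_mul_le_right)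
  finally show "rank Q = 2" using le by simp
qed

definition dot3 :: "real \<times> real \<times> real \<Rightarrow> real \<times> real \<times> real \<Rightarrow> real" where
  "dot3 x y = fst x * fst y + fst (snd x) * fst (snd y) + snd (snd x) * snd (snd y)"

definition Qt :: "real \<times> real \<times> real \<Rightarrow> real \<times> real \<times> real \<Rightarrow> real^4^4" where
  "Qt a b = Qm (fst a) (fst (snd a)) (snd (snd a)) (fst b) (fst (snd b)) (snd (snd b))"

lemma Qt_trace: "trace (Qt a b ** Qt c d) = 1 + dot3 a c * dot3 b d"
  by (simp add: Qt_def dot3_def Qm_trace)

lemma Qt_grass:
  assumes "dot3 a a = 1" "dot3 b b = 1" "dot3 a b \<noteq> 1"
  shows "Qt a b \<in> proj_grassmannian 2"
proof -
  obtain a1 a2 a3 b1 b2 b3 where ab: "a = (a1,a2,a3)" "b = (b1,b2,b3)" by (cases a; cases b) auto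
  have ua: "a1^2+a2^2+a3^2 = 1" and ub: "b1^2+b2^2+b3^2 = 1"
    using assms(1,2) by (simp_all add: ab dot3_def power2_eq_square)
  have c: "2*(1 - a1*b1 - a2*b2 - a3*b3) \<noteq> 0" using assms(3) by (simp add: ab dot3_def)
  note F = rank_frame[OF Um_frame[OF ua ub] Um_Qm[OF ua ub] c]
  have q: "Qt a b = Qm a1 a2 a3 b1 b2 b3" by (simp add: ab Qt_def)
  show ?thesis unfolding proj_grassmannian_def mem_Collect_eq q
    using Qm_sym[of a1 a2 a3 b1 b2 b3] F by (intro conjI)
qed

lemma tight_from:
  fixes a b :: "nat \<Rightarrow> real \<times> real \<times> real"
  assumes ua: "\<And>i. i < N \<Longrightarrow> dot3 (a i) (a i) = 1"
    and ub: "\<And>i. i < N \<Longrightarrow> dot3 (b i) (b i) = 1"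
    and nab: "\<And>i. i < N \<Longrightarrow> dot3 (a i) (b i) \<noteq> 1"
    and pr: "\<And>i j. i < N \<Longrightarrow> j < N \<Longrightarrow> i \<noteq> j \<Longrightarrow> dot3 (a i) (a j) * dot3 (b i) (b j) = w"
    and w1: "w \<noteq> 1"
    and val: "real 2 * (real N * real 2 - real CARD(4)) / (real CARD(4) * (real N - 1)) = 1 + w"
  shows "tight_simplex 2 N (\<lambda>i. Qt (a i) (b i))"
  unfolding tight_simplex_def
proof (intro conjI allI impI)
  fix i assume "i < N"
  then show "Qt (a i) (b i) \<in> proj_grassmannian 2" by (intro Qt_grass ua ub nab)
next
  show "inj_on (\<lambda>i. Qt (a i) (b i)) {..<N}"
  proof (rule inj_onI, rule ccontr)
    fix i j assume i: "i \<in> {..<N}" and j: "j \<in> {..<N}" and eq: "Qt (a i) (b i) = Qt (a j) (b j)" and ne: "i \<noteq> j"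
    have "dot3 (a i) (a j) * dot3 (b i) (b j) = w" using i j ne by (intro pr) auto
    then have "1 + w = trace (Qt (a i) (b i) ** Qt (a j) (b j))"
      unfolding Qt_trace by simp
    also have "\<dots> = trace (Qt (a i) (b i) ** Qt (a i) (b i))" using eq by simp
    also have "\<dots> = 2" using ua[of i] ub[of i] i unfolding Qt_trace by simp
    finally show False using w1 by simp
  qed
next
  fix i j assume "i < N" "j < N" "i \<noteq> j"
  then have "dot3 (a i) (a j) * dot3 (b i) (b j) = w" by (rule pr)
  then show "trace (Qt (a i) (b i) ** Qt (a j) (b j)) =
     real 2 * (real N * real 2 - real CARD(4)) / (real CARD(4) * (real N - 1))"
    unfolding val Qt_trace by simp
qed

definition a7 :: "nat \<Rightarrow> real \<times> real \<times> real" where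
  "a7 k = (cos (2 * (real k * (2*pi/7))), sin (2 * (real k * (2*pi/7))), 0)"
definition b7 :: "nat \<Rightarrow> real \<times> real \<times> real" where
  "b7 k = (sqrt (2/3) * cos (real k * (2*pi/7)), sqrt (2/3) * sin (real k * (2*pi/7)), sqrt (1/3))"

lemma sqrt23: "sqrt (2/3) * sqrt (2/3) = (2/3::real)" "sqrt (1/3) * sqrt (1/3) = (1/3::real)"
  by simp_all

lemma seven:
  "tight_simplex 2 7 (\<lambda>i. Qt (a7 i) (b7 i))"
proof (rule tight_from[where w = "-1/6"])
  fix i assume "i < (7::nat)"
  show "dot3 (a7 i) (a7 i) = 1" by (simp add: a7_def dot3_def)
  show "dot3 (b7 i) (b7 i) = 1"
  proof -
    define x where "x = real i * (2*pi/7)"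
    have "dot3 (b7 i) (b7 i) = sqrt (2/3) * cos x * (sqrt (2/3) * cos x) + sqrt (2/3) * sin x * (sqrt (2/3) * sin x) + sqrt (1/3) * sqrt (1/3)"
      unfolding b7_def dot3_def x_def[symmetric] by simp
    also have "\<dots> = (sqrt (2/3) * sqrt (2/3)) * (cos x * cos x + sin x * sin x) + sqrt (1/3) * sqrt (1/3)"
      by (simp only: distrib_left mult_ac)
    also have "\<dots> = 1" by (simp add: sin_cos_squared_add3)
    finally show ?thesis .
  qed
  show "dot3 (a7 i) (b7 i) \<noteq> 1"
  proof -
    define x where "x = real i * (2*pi/7)"
    have "dot3 (a7 i) (b7 i) = sqrt (2/3) * (cos (2*x) * cos x + sin (2*x) * sin x)"
      by (simp add: a7_def b7_def dot3_def x_def algebra_simps)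
    also have "\<dots> = sqrt (2/3) * cos (2*x - x)" by (simp only: cos_diff)
    also have "\<dots> = sqrt (2/3) * cos x" by simp
    also have "\<dots> \<le> sqrt (2/3)" by (simp add: mult_left_le)
    also have "\<dots> < 1" by (simp add: real_sqrt_lt_1_iff)
    finally show ?thesis by simp
  qed
next
  fix i j assume "i < (7::nat)" "j < 7" "i \<noteq> j"
  define d where "d = int i - int j"
  have nd: "\<not> (7 dvd d)" using \<open>i < 7\<close> \<open>j < 7\<close> \<open>i \<noteq> j\<close> unfolding d_def by presburger
  define x where "x = real_of_int d * (2*pi/7)"
  have xe: "real i * (2*pi/7) - real j * (2*pi/7) = x" by (simp add: x_def d_def algebra_simps)
  have "dot3 (a7 i) (a7 j) = cos (2 * (real i * (2*pi/7)) - 2 * (real j * (2*pi/7)))"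
    by (simp add: a7_def dot3_def cos_diff)
  also have "\<dots> = cos (2 * x)" by (simp only: xe[symmetric] right_diff_distrib)
  finally have A: "dot3 (a7 i) (a7 j) = cos (2 * x)" .
  define yi where "yi = real i * (2*pi/7)"
  define yj where "yj = real j * (2*pi/7)"
  have "dot3 (b7 i) (b7 j) = sqrt (2/3) * cos yi * (sqrt (2/3) * cos yj) + sqrt (2/3) * sin yi * (sqrt (2/3) * sin yj) + sqrt (1/3) * sqrt (1/3)"
    unfolding b7_def dot3_def yi_def[symmetric] yj_def[symmetric] by simp
  also have "\<dots> = (sqrt (2/3) * sqrt (2/3)) * (cos yi * cos yj + sin yi * sin yj) + sqrt (1/3) * sqrt (1/3)"
    by (simp only: distrib_left mult_ac)
  also have "\<dots> = (2/3) * cos (real i * (2*pi/7) - real j * (2*pi/7)) + 1/3"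
    by (simp add: cos_diff yi_def yj_def)
  finally have B: "dot3 (b7 i) (b7 j) = (2/3) * cos x + 1/3" unfolding xe .
  show "dot3 (a7 i) (a7 j) * dot3 (b7 i) (b7 j) = -1/6"
    unfolding A B x_def using key7[OF nd] .
qed simp_all



definition sp8 :: real where "sp8 = sqrt ((3 - sqrt 2)/7)"
definition sq8 :: real where "sq8 = sqrt ((3 + sqrt 2)/7)"
definition r8 :: real where "r8 = sqrt ((4 + sqrt 2)/14)"
definition s8 :: real where "s8 = sqrt ((4 - sqrt 2)/14)"

lemma u_bounds: "sqrt 2 < (1.42::real)" "0 < sqrt (2::real)"
proof -
  have "sqrt 2 < sqrt (1.42^2::real)" by (rule real_sqrt_less_mono) (simp add: power2_eq_square)
  then show "sqrt 2 < (1.42::real)" by simp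
qed simp
lemma t_bounds: "sqrt 7 < (2.65::real)" "0 < sqrt (7::real)"
proof -
  have "sqrt 7 < sqrt (2.65^2::real)" by (rule real_sqrt_less_mono) (simp add: power2_eq_square)
  then show "sqrt 7 < (2.65::real)" by simp
qed simp

lemma uu: "sqrt 2 * sqrt 2 = (2::real)" "sqrt 2 * (sqrt 2 * x) = 2 * (x::real)" by simp_all
lemma tt: "sqrt 7 * sqrt 7 = (7::real)" "sqrt 7 * (sqrt 7 * x) = 7 * (x::real)" by simp_all

lemma sq_facts:
  "sp8 * sp8 = (3 - sqrt 2)/7" "sq8 * sq8 = (3 + sqrt 2)/7"
  "r8 * r8 = (4 + sqrt 2)/14" "s8 * s8 = (4 - sqrt 2)/14"
  using u_bounds by (simp_all add: sp8_def sq8_def r8_def s8_def)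

lemma sqeq: "0 \<le> x \<Longrightarrow> 0 \<le> y \<Longrightarrow> x * x = y * y \<Longrightarrow> x = (y::real)"
  using power2_eq_iff_nonneg by (metis power2_eq_square)

lemma nn8: "0 \<le> sp8" "0 \<le> sq8" "0 \<le> r8" "0 \<le> s8"
  unfolding sp8_def sq8_def r8_def s8_def using u_bounds
  by (auto intro!: real_sqrt_ge_zero)

lemma prod_facts: "sp8 * sq8 = sqrt 7 / 7" "r8 * s8 = sqrt 2 * sqrt 7 / 14"
proof -
  have "(sp8 * sq8) * (sp8 * sq8) = (sp8 * sp8) * (sq8 * sq8)" by (simp only: ac_simps)
  also have "\<dots> = (sqrt 7 / 7) * (sqrt 7 / 7)" unfolding sq_facts by (simp add: field_simps uu tt)
  finally have e: "(sp8 * sq8) * (sp8 * sq8) = (sqrt 7 / 7) * (sqrt 7 / 7)" .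
  show "sp8 * sq8 = sqrt 7 / 7"
    by (rule sqeq[OF _ _ e]) (use nn8 in simp_all)
  have "(r8 * s8) * (r8 * s8) = (r8 * r8) * (s8 * s8)" by (simp only: ac_simps)
  also have "\<dots> = (sqrt 2 * sqrt 7 / 14) * (sqrt 2 * sqrt 7 / 14)" unfolding sq_facts by (simp add: field_simps uu tt)
  finally have e2: "(r8 * s8) * (r8 * s8) = (sqrt 2 * sqrt 7 / 14) * (sqrt 2 * sqrt 7 / 14)" .
  show "r8 * s8 = sqrt 2 * sqrt 7 / 14"
    by (rule sqeq[OF _ _ e2]) (use nn8 in simp_all)
qed

lemma prod_facts': "sq8 * sp8 = sqrt 7 / 7" "s8 * r8 = sqrt 2 * sqrt 7 / 14"
  using prod_facts by (simp_all add: mult.commute)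

definition a8 :: "nat \<Rightarrow> real \<times> real \<times> real" where
  "a8 k = [(sp8,r8,r8),(sp8,-r8,-r8),(-sp8,r8,-r8),(-sp8,-r8,r8),
           (-sq8,-s8,s8),(-sq8,s8,-s8),(sq8,-s8,-s8),(sq8,s8,s8)] ! k"
definition b8 :: "nat \<Rightarrow> real \<times> real \<times> real" where
  "b8 k = [(-sq8,-s8,-s8),(-sq8,s8,s8),(-sq8,s8,-s8),(-sq8,-s8,s8),
           (-sp8,r8,-r8),(-sp8,-r8,r8),(-sp8,-r8,-r8),(-sp8,r8,r8)] ! k"

lemma less8: "i < (8::nat) \<Longrightarrow> i = 0 \<or> i = 1 \<or> i = 2 \<or> i = 3 \<or> i = 4 \<or> i = 5 \<or> i = 6 \<or> i = 7"
  by arith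

lemmas R8 = sq_facts prod_facts prod_facts'

lemma norm8: "i < 8 \<Longrightarrow> dot3 (a8 i) (a8 i) = 1 \<and> dot3 (b8 i) (b8 i) = 1"
  by (drule less8) (auto simp: a8_def b8_def dot3_def R8 field_simps)

lemma ab8: "i < 8 \<Longrightarrow> dot3 (a8 i) (b8 i) \<noteq> 1"
proof -
  have b0: "sqrt 7 * (1 + sqrt 2) < 7"
  proof -
    have "sqrt 7 * (1 + sqrt 2) \<le> 2.65 * (1 + sqrt 2)"
      using t_bounds u_bounds by (intro mult_right_mono) auto
    also have "\<dots> < 7" using u_bounds by simp
    finally show ?thesis .
  qed
  have b: "sqrt 7 + sqrt 2 * sqrt 7 < 7" using b0 by (simp add: algebra_simps)
  have p: "0 < sqrt 2 * sqrt 7" by simp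
  have t: "0 < sqrt 7" by simp
  have v: "7 * dot3 (a8 i) (b8 i) = -(sqrt 7 + sqrt 2 * sqrt 7) \<or> 7 * dot3 (a8 i) (b8 i) = (sqrt 7 + sqrt 2 * sqrt 7)
    \<or> 7 * dot3 (a8 i) (b8 i) = (sqrt 7 - sqrt 2 * sqrt 7) \<or> 7 * dot3 (a8 i) (b8 i) = (sqrt 2 * sqrt 7 - sqrt 7)"
    if "i < 8"
    using less8[OF that] by (elim disjE) (simp_all add: a8_def b8_def dot3_def R8 field_simps)
  assume "i < 8"
  from v[OF this] have "dot3 (a8 i) (b8 i) < 1"
    by (elim disjE) (use b p t in linarith)+
  then show ?thesis by simp
qed

lemma pair8: "i < 8 \<Longrightarrow> j < 8 \<Longrightarrow> i \<noteq> j \<Longrightarrow> dot3 (a8 i) (a8 j) * dot3 (b8 i) (b8 j) = -1/7"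
  apply (drule less8, drule less8)
  apply (elim disjE)
  apply (simp_all add: a8_def b8_def dot3_def R8)
  apply (simp_all add: field_simps uu tt)
  done


lemma eight: "tight_simplex 2 8 (\<lambda>i. Qt (a8 i) (b8 i))"
proof (rule tight_from[where w = "-1/7"])
  fix i assume "i < (8::nat)"
  then show "dot3 (a8 i) (a8 i) = 1" "dot3 (b8 i) (b8 i) = 1" "dot3 (a8 i) (b8 i) \<noteq> 1"
    using norm8 ab8 by auto
next
  fix i j assume "i < (8::nat)" "j < 8" "i \<noteq> j"
  then show "dot3 (a8 i) (a8 j) * dot3 (b8 i) (b8 j) = -1/7" by (rule pair8)
qed simp_all

theorem theorem6p8:
  shows "(\<exists>P :: nat \<Rightarrow> real^4^4. tight_simplex 2 7 P) \<and>
         (\<exists>P :: nat \<Rightarrow> real^4^4. tight_simplex 2 8 P)"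
  using seven eight by blast

end
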